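(* Let $N\ge2$, let $v_1,\dots,v_N$ be distinct reals with prior probabilities $p(v_n)>0$, $\sum_np(v_n)=1$, and let $\lambda,\sigma_Z,T>0$, $G$ the CDF of $N(0,\sigma_Z^2T)$. For a continuous signal $\tilde s$ with density $q$, CDF $Q$, and posteriors $p(v_n|s)$ such that $s\mapsto\mathbb E[\tilde v|s]=\sum_nv_np(v_n|s)$ is strictly increasing on $\operatorname{support}(q)$, the informed trader's value $$\frac12\Big\{\mathbb E\big[\mathbb E[\tilde v|\tilde s]^2\big]+\mathbb E[Z_T^2]-W_2^2(F_s,G)\Big\}-\lambda I(\tilde s;\tilde v)$$ equals $$\int\mathbb E[\tilde v|s]\,G^{-1}(Q(s))\,q(s)\,ds-\lambda\Big\{\sum_{n=1}^N\int\log\big(p(v_n|s)\big)p(v_n|s)q(s)\,ds-\sum_{n=1}^N\log\big(p(v_n)\big)p(v_n)\Big\}.$$ Consequently, the informed trader's optimization problem is to maximize the latter expression over $(p(\cdot|\cdot),q(\cdot))$ subject to $\sum_{n=1}^Np(v_n|s)=1$ for all $s$ and $\int p(v_n|s)q(s)\,ds=p(v_n)$ for all $1\le n\le N$.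
   Context: $Z_T\sim N(0,\sigma_Z^2T)$ is the terminal noise trade, $F_s$ is the distribution function of $\mathbb E[\tilde v|\tilde s]$, $W_2$ is the Wasserstein-2 distance, and $I(\tilde s;\tilde v)=\mathbb H(p)-\int q(s)\mathbb H(p(\cdot|s))\,ds$ is the mutual information with $\mathbb H(\mu)=-\sum\mu\log\mu$ the entropy. *)

theory Defs
  imports "HOL-Probability.Probability"
begin

definition couplings :: "real measure \<Rightarrow> real measure \<Rightarrow> (real \<times> real) measure set" where
  "couplings \<mu> \<nu> = {\<pi>. prob_space \<pi> \<and> sets \<pi> = sets (borel :: (real \<times> real) measure)
      \<and> distr \<pi> borel fst = \<mu> \<and> distr \<pi> borel snd = \<nu>}"

definition W2_sq :: "real measure \<Rightarrow> real measure \<Rightarrow> ennreal" where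
  "W2_sq \<mu> \<nu> = (INF \<pi> \<in> couplings \<mu> \<nu>. \<integral>\<^sup>+ z. ennreal ((fst z - snd z)\<^sup>2) \<partial>\<pi>)"

definition quantile :: "(real \<Rightarrow> real) \<Rightarrow> real \<Rightarrow> real" where
  "quantile F u = Inf {x. u \<le> F x}"

definition entropy_vec :: "nat \<Rightarrow> (nat \<Rightarrow> real) \<Rightarrow> real" where
  "entropy_vec N \<mu> = - (\<Sum>n=1..N. \<mu> n * ln (\<mu> n))"

definition mutual_info :: "nat \<Rightarrow> (nat \<Rightarrow> real) \<Rightarrow> (nat \<Rightarrow> real \<Rightarrow> real) \<Rightarrow> (real \<Rightarrow> real) \<Rightarrow> real" where
  "mutual_info N p post q = entropy_vec N p - (\<integral> s. q s * entropy_vec N (\<lambda>n. post n s) \<partial>lborel)"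

definition cond_mean :: "nat \<Rightarrow> (nat \<Rightarrow> real) \<Rightarrow> (nat \<Rightarrow> real \<Rightarrow> real) \<Rightarrow> real \<Rightarrow> real" where
  "cond_mean N v post s = (\<Sum>n=1..N. v n * post n s)"

text \<open>Gaussian law N(0, sigma^2 T) (second argument of normal_density is the standard deviation).\<close>
definition gauss :: "real \<Rightarrow> real \<Rightarrow> real measure" where
  "gauss \<sigma> T = density lborel (normal_density 0 (\<sigma> * sqrt T))"

end

theory Submission
  imports Defs
begin

locale core =
  fixes q m :: "real \<Rightarrow> real" and \<nu> :: "real measure" and a b :: real
  assumes q_meas[measurable]: "q \<in> borel_measurable borel"
  and q_nonneg: "\<And>s. 0 \<le> q s"
  and q_prob: "(\<integral>\<^sup>+ s. ennreal (q s) \<partial>lborel) = 1"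
  and m_meas[measurable]: "m \<in> borel_measurable borel"
  and m_bnd: "\<And>s. a \<le> m s \<and> m s \<le> b"
  and m_mono: "strict_mono_on {s. q s > 0} m"
  and nu: "real_distribution \<nu>"
  and nu_sq: "integrable \<nu> (\<lambda>z. z^2)"
begin

definition "M = density lborel q"
definition "Qf = cdf M"
definition "G = cdf \<nu>"
definition "Y s = quantile G (Qf s)"

lemma sets_M[simp, measurable_cong]: "sets M = sets borel"
  by (simp add: M_def)

lemma space_M[simp]: "space M = UNIV"
  by (simp add: M_def)

lemma M_real: "real_distribution M"
proof -
  have "prob_space M"
    unfolding M_def by (rule prob_spaceI) (simp add: emeasure_density q_prob)
  then show ?thesis by (simp add: real_distribution_def real_distribution_axioms_def)
qed

interpretation MM: real_distribution M by (rule M_real)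
interpretation NU: cdf_distribution \<nu> using nu by (simp add: cdf_distribution_def)

lemma M_single: "measure M {x} = 0"
proof -
  have "emeasure M {x} = (\<integral>\<^sup>+ s. ennreal (q s) * indicator {x} s \<partial>lborel)"
    unfolding M_def by (simp add: emeasure_density)
  also have "\<dots> = 0" by simp
  finally show ?thesis by (simp add: measure_def)
qed

lemma Qf_cont: "isCont Qf x"
  unfolding Qf_def using MM.isCont_cdf M_single by blast

lemma Qf_cont_on: "continuous_on S Qf"
  using Qf_cont by (simp add: continuous_at_imp_continuous_on)

lemma Qf_mono: "x \<le> y \<Longrightarrow> Qf x \<le> Qf y"
  unfolding Qf_def by (rule MM.cdf_nondecreasing)

lemma Qf_bnd: "0 \<le> Qf x" "Qf x \<le> 1"
  unfolding Qf_def by (auto intro: MM.cdf_nonneg MM.cdf_bounded_prob)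

lemma Qf_top: "(Qf \<longlongrightarrow> 1) at_top"
  unfolding Qf_def by (rule MM.cdf_lim_at_top_prob)

lemma Qf_bot: "(Qf \<longlongrightarrow> 0) at_bot"
  unfolding Qf_def by (rule MM.cdf_lim_at_bot)

lemma Qf_meas[measurable]: "Qf \<in> borel_measurable borel"
  by (intro borel_measurable_mono) (auto simp: mono_def Qf_mono)

lemma measure_atMost: "measure M {..x} = Qf x"
  by (simp add: Qf_def cdf_def)

lemma PIT:
  assumes w: "0 \<le> w" "w \<le> 1"
  shows "measure M {s. Qf s \<le> w} = w"
proof (cases "w = 1")
  case True
  then have "{s. Qf s \<le> w} = space M" using Qf_bnd by auto
  then show ?thesis using True MM.prob_space by simp
next
  case False
  then have w1: "w < 1" using w by simp
  define D where "D = {s. Qf s \<le> w}"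
  obtain st where st: "Qf st > w"
    using order_tendstoD(1)[OF Qf_top w1] by (meson eventually_at_top_linorder order_refl)
  have ub: "d < st" if "d \<in> D" for d
    using that st Qf_mono[of st d] unfolding D_def by force
  show ?thesis
  proof (cases "D = {}")
    case True
    have "w \<le> 0"
    proof (rule ccontr)
      assume "\<not> w \<le> 0"
      then have "w > 0" by simp
      then obtain s where "Qf s < w"
        using order_tendstoD(2)[OF Qf_bot] by (meson eventually_at_bot_linorder order_refl)
      then show False using True unfolding D_def by (metis (mono_tags) empty_iff mem_Collect_eq less_imp_le)
    qed
    then show ?thesis using True w unfolding D_def by simp
  next
    case False
    define s0 where "s0 = Sup D"
    have bdd: "bdd_above D" using ub by (meson bdd_aboveI less_imp_le)
    have cl: "closed D" unfolding D_def
      by (intro closed_Collect_le Qf_cont_on continuous_on_const)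
    have s0D: "s0 \<in> D" unfolding s0_def by (rule closed_contains_Sup[OF False bdd cl])
    have Deq: "D = {..s0}"
    proof
      show "D \<subseteq> {..s0}" using cSup_upper[OF _ bdd] unfolding s0_def by auto
      show "{..s0} \<subseteq> D" using s0D Qf_mono unfolding D_def by (auto intro: order_trans)
    qed
    have le: "Qf s0 \<le> w" using s0D unfolding D_def by simp
    have ge: "Qf s0 \<ge> w"
    proof (rule ccontr)
      assume "\<not> Qf s0 \<ge> w"
      then have "Qf s0 \<le> w" by simp
      moreover have "s0 \<le> st" using ub[OF s0D] by simp
      ultimately obtain x where x: "s0 \<le> x" "x \<le> st" "Qf x = w"
        using IVT'[of Qf s0 w st] st Qf_cont_on by force
      then have "x \<in> D" unfolding D_def by simp
      then have "x = s0" using Deq x by auto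
      then show False using x \<open>\<not> Qf s0 \<ge> w\<close> by simp
    qed
    show ?thesis using Deq le ge measure_atMost unfolding D_def[symmetric] by simp
  qed
qed

definition "P = {s. 0 < q s \<and> 0 < Qf s \<and> Qf s < 1}"

lemma AE_P: "AE s in M. s \<in> P"
proof -
  have 1: "AE s in M. 0 < q s"
    unfolding M_def by (subst AE_density) (auto simp: q_nonneg)
  have 2: "AE s in M. 0 < Qf s"
  proof -
    have "emeasure M {s. Qf s \<le> 0} = 0"
      using PIT[of 0] by (simp add: MM.emeasure_eq_measure)
    then show ?thesis
      by (subst AE_iff_measurable[of "{s. Qf s \<le> 0}"]) auto
  qed
  have 3: "AE s in M. Qf s < 1"
  proof -
    define U where "U = {s. 1 \<le> Qf s}"
    have "measure M U = 0"
    proof (cases "U = {}")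
      case True then show ?thesis by simp
    next
      case False
      obtain sb where sb: "Qf sb < 1"
        using order_tendstoD(2)[OF Qf_bot] by (meson eventually_at_bot_linorder order_refl zero_less_one)
      have lb: "sb < u" if "u \<in> U" for u
        using that sb Qf_mono[of u sb] unfolding U_def by force
      have bdd: "bdd_below U" using lb by (meson bdd_belowI less_imp_le)
      have cl: "closed U" unfolding U_def
        by (intro closed_Collect_le Qf_cont_on continuous_on_const)
      define s1 where "s1 = Inf U"
      have s1U: "s1 \<in> U" unfolding s1_def by (rule closed_contains_Inf[OF False bdd cl])
      have Ueq: "U = {s1..}"
      proof
        show "U \<subseteq> {s1..}" using cInf_lower[OF _ bdd] unfolding s1_def by auto
        show "{s1..} \<subseteq> U" using s1U Qf_mono Qf_bnd unfolding U_def by (auto intro: order_trans)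
      qed
      have Q1: "Qf s1 = 1" using s1U Qf_bnd unfolding U_def by (simp add: antisym)
      have "{s1..} = space M - {..<s1}" by auto
      then have "measure M {s1..} = 1 - measure M {..<s1}"
        using MM.prob_compl[of "{..<s1}"] by simp
      moreover have "measure M {..s1} = measure M {..<s1} + measure M {s1}"
        by (subst MM.finite_measure_Union[symmetric]) (auto intro!: arg_cong[where f="measure M"])
      ultimately show ?thesis using Ueq Q1 M_single measure_atMost by simp
    qed
    then have "emeasure M U = 0" by (simp add: MM.emeasure_eq_measure)
    then show ?thesis unfolding U_def
      by (subst AE_iff_measurable[of "{s. 1 \<le> Qf s}"]) (auto simp: not_less)
  qed
  show ?thesis using 1 2 3 unfolding P_def by eventually_elim auto
qed

end


context core
begin

interpretation MM: real_distribution M by (rule M_real)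
interpretation NU: cdf_distribution \<nu> using nu by (simp add: cdf_distribution_def)

lemma quantile_eq: "quantile G u = NU.I u"
  by (simp add: quantile_def G_def)

lemma G_bnd: "0 \<le> G x" "G x \<le> 1"
  unfolding G_def by (auto intro: NU.cdf_nonneg NU.cdf_bounded_prob)

lemma quantile_meas[measurable]: "quantile G \<in> borel_measurable borel"
proof (rule borel_measurable_piecewise_mono[of "{{..0}, {0<..<1}, {1}, {1<..}}"])
  fix c :: "real set" assume c: "c \<in> {{..0}, {0<..<1}, {1}, {1<..}}"
  have A: "{x. u \<le> G x} = UNIV" if "u \<le> 0" for u using that G_bnd(1) by (auto intro: order_trans)
  have B: "{x. u \<le> G x} = {}" if "u > 1" for u
  proof -
    have "\<not> u \<le> G x" for x using G_bnd(2)[of x] that by linarith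
    then show ?thesis by blast
  qed
  show "mono_on c (quantile G)"
    using c
  proof safe
    show "mono_on {..0} (quantile G)" unfolding quantile_def by (rule mono_onI) (simp add: A)
    show "mono_on {1<..} (quantile G)" unfolding quantile_def by (rule mono_onI) (simp add: B)
    show "mono_on {1} (quantile G)" by (rule mono_onI) simp
    show "mono_on {0<..<1} (quantile G)" unfolding quantile_eq[abs_def] by (rule NU.mono_I)
  qed
next
  show "countable {{..0}, {0<..<1}, {1}, ({1<..} :: real set)}" by simp
next
  fix c :: "real set" assume "c \<in> {{..0}, {0<..<1}, {1}, {1<..}}"
  then show "c \<in> sets borel" by auto
next
  show "\<Union> {{..0}, {0<..<1}, {1}, ({1<..} :: real set)} = UNIV"
  proof (intro set_eqI iffI)
    fix x :: real
    show "x \<in> \<Union> {{..0}, {0<..<1}, {1}, ({1<..} :: real set)}"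
      by (cases "x \<le> 0"; cases "x < 1"; cases "x = 1") auto
  qed simp
qed

lemma Y_meas[measurable]: "Y \<in> borel_measurable borel"
proof -
  have "(\<lambda>s. quantile G (Qf s)) \<in> borel_measurable borel"
    using measurable_comp[OF Qf_meas quantile_meas] by (simp add: comp_def)
  then show ?thesis by (simp add: Y_def[abs_def])
qed

lemma Y_galois: "s \<in> P \<Longrightarrow> Y s \<le> y \<longleftrightarrow> Qf s \<le> G y"
  unfolding Y_def G_def quantile_def using NU.pseudoinverse[of "Qf s" y] unfolding P_def by simp

lemma Y_mono: "s \<in> P \<Longrightarrow> s' \<in> P \<Longrightarrow> s \<le> s' \<Longrightarrow> Y s \<le> Y s'"
  unfolding Y_def quantile_eq using mono_onD[OF NU.mono_I, of "Qf s" "Qf s'"] Qf_mono[of s s']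
  unfolding P_def by simp

lemma distr_Y: "distr M borel Y = \<nu>"
proof (rule cdf_unique)
  show "real_distribution (distr M borel Y)" by (intro MM.real_distribution_distr) simp
  show "real_distribution \<nu>" by (rule nu)
  show "cdf (distr M borel Y) = cdf \<nu>"
  proof
    fix y
    have "cdf (distr M borel Y) y = measure M {s. Y s \<le> y}"
      by (simp add: cdf_def measure_distr vimage_def)
    also have "\<dots> = measure M {s. Qf s \<le> G y}"
    proof (rule measure_eq_AE)
      show "AE x in M. (x \<in> {s. Y s \<le> y}) = (x \<in> {s. Qf s \<le> G y})"
        using AE_P by eventually_elim (simp add: Y_galois)
    qed auto
    also have "\<dots> = G y" using PIT G_bnd by simp
    finally show "cdf (distr M borel Y) y = cdf \<nu> y" by (simp add: G_def)
  qed
qed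


lemma fst_meas[measurable]: "(fst :: real \<times> real \<Rightarrow> real) \<in> borel_measurable borel"
  by (intro borel_measurable_continuous_onI continuous_intros)

lemma snd_meas[measurable]: "(snd :: real \<times> real \<Rightarrow> real) \<in> borel_measurable borel"
  by (intro borel_measurable_continuous_onI continuous_intros)

lemma Y_sq_int: "integrable M (\<lambda>s. (Y s)^2)"
  using nu_sq integrable_distr_eq[of Y M borel "\<lambda>z. z^2"] distr_Y by simp

lemma Y_int: "integrable M Y"
  by (rule MM.square_integrable_imp_integrable[OF Y_meas[THEN MM.measurable_finite_borel] Y_sq_int])

definition "K = \<bar>a\<bar> + \<bar>b\<bar>"

lemma K_nonneg: "0 \<le> K" unfolding K_def by simp

lemma m_abs: "\<bar>m s\<bar> \<le> K"
  using m_bnd[of s] unfolding K_def by linarith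

lemma m_int: "integrable M m"
  by (rule MM.integrable_const_bound[where B=K]) (auto simp: m_abs)

lemma m_sq_int: "integrable M (\<lambda>s. (m s)^2)"
proof (rule MM.integrable_const_bound[where B="K^2"])
  show "AE x in M. norm ((m x)^2) \<le> K^2"
  proof -
    have "(m x)^2 \<le> K^2" for x using power_mono[OF m_abs[of x] abs_ge_zero, of 2] by (simp add: power2_abs)
    then show ?thesis by simp
  qed
qed simp

lemma mY_int: "integrable M (\<lambda>s. m s * Y s)"
proof (rule Bochner_Integration.integrable_bound)
  show "integrable M (\<lambda>x. K * \<bar>Y x\<bar>)" using Y_int by simp
  show "AE x in M. norm (m x * Y x) \<le> norm (K * \<bar>Y x\<bar>)"
    using m_abs K_nonneg by (auto simp: abs_mult intro!: mult_right_mono)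
qed simp


definition "mu = distr M borel m"
definition "pi0 = distr M borel (\<lambda>s. (m s, Y s))"

lemma cpD:
  assumes "\<pi> \<in> couplings mu \<nu>"
  shows "prob_space \<pi>" "sets \<pi> = sets borel" "distr \<pi> borel fst = mu" "distr \<pi> borel snd = \<nu>"
    "space \<pi> = UNIV"
  using assms unfolding couplings_def by (auto dest: sets_eq_imp_space_eq)

lemma cp_meas_eq: "\<pi> \<in> couplings mu \<nu> \<Longrightarrow> measurable \<pi> borel = measurable borel borel"
  by (rule measurable_cong_sets[OF cpD(2) refl])

lemma cp_meas: "\<pi> \<in> couplings mu \<nu> \<Longrightarrow> h \<in> borel_measurable borel \<Longrightarrow> h \<in> borel_measurable \<pi>"
  using cp_meas_eq by blast

lemma cp_fst_meas: "\<pi> \<in> couplings mu \<nu> \<Longrightarrow> fst \<in> borel_measurable \<pi>"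
  by (rule cp_meas) simp_all

lemma cp_snd_meas: "\<pi> \<in> couplings mu \<nu> \<Longrightarrow> snd \<in> borel_measurable \<pi>"
  by (rule cp_meas) simp_all

lemma cp_fst:
  fixes f :: "real \<Rightarrow> real"
  assumes \<pi>: "\<pi> \<in> couplings mu \<nu>" and f[measurable]: "f \<in> borel_measurable borel"
  shows "integral\<^sup>L \<pi> (\<lambda>z. f (fst z)) = integral\<^sup>L M (\<lambda>s. f (m s))"
    "integrable \<pi> (\<lambda>z. f (fst z)) \<longleftrightarrow> integrable M (\<lambda>s. f (m s))"
proof -
  note fm = cp_fst_meas[OF \<pi>]
  have "integral\<^sup>L \<pi> (\<lambda>z. f (fst z)) = integral\<^sup>L (distr \<pi> borel fst) f"
    by (rule integral_distr[OF fm f, symmetric])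
  also have "\<dots> = integral\<^sup>L M (\<lambda>s. f (m s))"
    unfolding cpD(3)[OF \<pi>] mu_def by (rule integral_distr) simp_all
  finally show "integral\<^sup>L \<pi> (\<lambda>z. f (fst z)) = integral\<^sup>L M (\<lambda>s. f (m s))" .
  have "integrable \<pi> (\<lambda>z. f (fst z)) \<longleftrightarrow> integrable (distr \<pi> borel fst) f"
    by (rule integrable_distr_eq[OF fm f, symmetric])
  also have "\<dots> \<longleftrightarrow> integrable M (\<lambda>s. f (m s))"
    unfolding cpD(3)[OF \<pi>] mu_def by (rule integrable_distr_eq) simp_all
  finally show "integrable \<pi> (\<lambda>z. f (fst z)) \<longleftrightarrow> integrable M (\<lambda>s. f (m s))" .
qed

lemma cp_snd:
  fixes f :: "real \<Rightarrow> real"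
  assumes \<pi>: "\<pi> \<in> couplings mu \<nu>" and f[measurable]: "f \<in> borel_measurable borel"
  shows "integral\<^sup>L \<pi> (\<lambda>z. f (snd z)) = integral\<^sup>L M (\<lambda>s. f (Y s))"
    "integrable \<pi> (\<lambda>z. f (snd z)) \<longleftrightarrow> integrable M (\<lambda>s. f (Y s))"
proof -
  note fm = cp_snd_meas[OF \<pi>]
  have "integral\<^sup>L \<pi> (\<lambda>z. f (snd z)) = integral\<^sup>L (distr \<pi> borel snd) f"
    by (rule integral_distr[OF fm f, symmetric])
  also have "\<dots> = integral\<^sup>L M (\<lambda>s. f (Y s))"
    using integral_distr[of Y M borel f] cpD(4)[OF \<pi>] distr_Y by simp
  finally show "integral\<^sup>L \<pi> (\<lambda>z. f (snd z)) = integral\<^sup>L M (\<lambda>s. f (Y s))" .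
  have "integrable \<pi> (\<lambda>z. f (snd z)) \<longleftrightarrow> integrable (distr \<pi> borel snd) f"
    by (rule integrable_distr_eq[OF fm f, symmetric])
  also have "\<dots> \<longleftrightarrow> integrable M (\<lambda>s. f (Y s))"
    using integrable_distr_eq[of Y M borel f] cpD(4)[OF \<pi>] distr_Y by simp
  finally show "integrable \<pi> (\<lambda>z. f (snd z)) \<longleftrightarrow> integrable M (\<lambda>s. f (Y s))" .
qed

lemma cp_AE_fst:
  assumes \<pi>: "\<pi> \<in> couplings mu \<nu>"
  shows "AE z in \<pi>. a \<le> fst z \<and> fst z \<le> b"
proof -
  have "AE x in mu. a \<le> x \<and> x \<le> b" unfolding mu_def
    by (subst AE_distr_iff) (auto simp: m_bnd)
  then have "AE x in distr \<pi> borel fst. a \<le> x \<and> x \<le> b" using cpD(3)[OF \<pi>] by metis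
  then show ?thesis by (subst (asm) AE_distr_iff[OF cp_fst_meas[OF \<pi>]]) auto
qed

lemma cp_measure_fst:
  assumes \<pi>: "\<pi> \<in> couplings mu \<nu>"
  shows "measure \<pi> {z. t < fst z} = measure M {s. t < m s}"
proof -
  have "measure \<pi> {z. t < fst z} = measure (distr \<pi> borel fst) {t<..}"
    using cpD(5)[OF \<pi>] by (subst measure_distr[OF cp_fst_meas[OF \<pi>]]) (auto simp: vimage_def)
  also have "\<dots> = measure M {s. t < m s}"
    unfolding cpD(3)[OF \<pi>] mu_def by (subst measure_distr) (auto simp: vimage_def)
  finally show ?thesis .
qed

lemma pi0_cp: "pi0 \<in> couplings mu \<nu>"
  unfolding couplings_def pi0_def
proof (intro CollectI conjI)
  show "sets (distr M borel (\<lambda>s. (m s, Y s))) = sets borel" by (rule sets_distr)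
  show "prob_space (distr M borel (\<lambda>s. (m s, Y s)))" by (rule MM.prob_space_distr) simp
  show "distr (distr M borel (\<lambda>s. (m s, Y s))) borel fst = mu"
    unfolding mu_def by (subst distr_distr) (simp_all add: comp_def)
  show "distr (distr M borel (\<lambda>s. (m s, Y s))) borel snd = \<nu>"
    using distr_distr[of snd borel borel "\<lambda>s. (m s, Y s)" M] distr_Y by (simp add: comp_def)
qed


definition gf :: "(real \<times> real) measure \<Rightarrow> real \<Rightarrow> real" where
  "gf \<pi> t = (\<integral>z. (if t < fst z then snd z else 0) \<partial>\<pi>)"

definition "Lm x = measure lborel {t. a \<le> t \<and> t \<le> b \<and> t < x}"



lemma S_eq: "{t. a \<le> t \<and> t \<le> b \<and> t < x} = {a..b} \<inter> {..<x}" by auto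

lemma ab: "a \<le> b" using m_bnd[of 0] by linarith

lemma ab_fin: "emeasure lborel {a..b} < \<top>"
  using ab by simp

lemma S_fin: "emeasure lborel ({a..b} \<inter> {..<x}) < \<top>"
proof -
  have "emeasure lborel ({a..b} \<inter> {..<x}) \<le> emeasure lborel {a..b}"
    by (rule emeasure_mono) auto
  then show ?thesis using ab_fin by (simp add: order.strict_trans1)
qed

lemma int_if_c: fixes c :: real shows "(\<integral>t. (if a \<le> t \<and> t \<le> b \<and> t < x then c else 0) \<partial>lborel) = c * Lm x"
proof -
  have "(\<lambda>t. if a \<le> t \<and> t \<le> b \<and> t < x then c else 0) = (\<lambda>t. c * indicator {t. a \<le> t \<and> t \<le> b \<and> t < x} t)"
    by (auto simp: indicator_def fun_eq_iff)
  then show ?thesis by (simp add: Lm_def)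
qed

lemma integrable_if_c: fixes c :: real shows "integrable lborel (\<lambda>t. (if a \<le> t \<and> t \<le> b \<and> t < x then c else 0))"
proof -
  have "(\<lambda>t. if a \<le> t \<and> t \<le> b \<and> t < x then c else 0) = (\<lambda>t. c * indicator {t. a \<le> t \<and> t \<le> b \<and> t < x} t)"
    by (auto simp: indicator_def fun_eq_iff)
  moreover have "integrable lborel (indicator {t. a \<le> t \<and> t \<le> b \<and> t < x} :: real \<Rightarrow> real)"
    by (rule integrable_real_indicator) (auto simp: S_eq S_fin ab_fin)
  ultimately show ?thesis by simp
qed

lemma Lm_mono: "x \<le> y \<Longrightarrow> Lm x \<le> Lm y"
  unfolding Lm_def
  by (rule measure_mono_fmeasurable) (auto simp: S_eq fmeasurable_def S_fin ab_fin)

lemma Lm_meas[measurable]: "Lm \<in> borel_measurable borel"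
  by (intro borel_measurable_mono) (auto simp: mono_def Lm_mono)

lemma Lm_nonneg: "0 \<le> Lm x" unfolding Lm_def by simp

lemma Lm_le: "Lm x \<le> b - a"
proof -
  have "Lm x \<le> measure lborel {a..b}"
    unfolding Lm_def
    by (rule measure_mono_fmeasurable) (auto simp: S_eq fmeasurable_def ab_fin)
  then show ?thesis using ab by simp
qed

lemma Lm_eq: "a \<le> x \<Longrightarrow> x \<le> b \<Longrightarrow> Lm x = x - a"
proof -
  assume "a \<le> x" "x \<le> b"
  then have "{t. a \<le> t \<and> t \<le> b \<and> t < x} = {a..<x}" by auto
  then show ?thesis using \<open>a \<le> x\<close> by (simp add: Lm_def)
qed


lemma cp_snd_int: "\<pi> \<in> couplings mu \<nu> \<Longrightarrow> integrable \<pi> snd"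
  using cp_snd(2)[of \<pi> "\<lambda>x. x"] Y_int by simp

lemma layer:
  assumes \<pi>: "\<pi> \<in> couplings mu \<nu>"
  shows "integrable lborel (\<lambda>t. indicator {a..b} t * gf \<pi> t)"
    "(\<integral>z. fst z * snd z \<partial>\<pi>) = a * (\<integral>z. snd z \<partial>\<pi>) + (\<integral>t. indicator {a..b} t * gf \<pi> t \<partial>lborel)"
proof -
  interpret P: prob_space \<pi> using cpD(1)[OF \<pi>] .
  interpret PS: pair_sigma_finite \<pi> lborel
    by (rule pair_sigma_finite.intro) (simp_all add: P.sigma_finite_measure_axioms lborel.sigma_finite_measure_axioms)
  have sp: "space \<pi> = UNIV" using cpD(5)[OF \<pi>] .
  define F where "F z t = (if a \<le> t \<and> t \<le> b \<and> t < fst z then snd z else (0::real))" for z :: "real \<times> real" and t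
  have sets_eq: "sets (\<pi> \<Otimes>\<^sub>M lborel) = sets (borel \<Otimes>\<^sub>M borel)"
    by (rule sets_pair_measure_cong[OF cpD(2)[OF \<pi>]]) simp
  have Fm: "(\<lambda>p. F (fst p) (snd p)) \<in> borel_measurable (\<pi> \<Otimes>\<^sub>M lborel)"
  proof -
    have "(\<lambda>p. F (fst p) (snd p)) \<in> borel_measurable (borel \<Otimes>\<^sub>M borel)"
      unfolding F_def by measurable
    then show ?thesis using measurable_cong_sets[OF sets_eq refl, of borel] by blast
  qed
  have inner: "(\<integral>t. F z t \<partial>lborel) = snd z * Lm (fst z)" for z
    unfolding F_def by (rule int_if_c)
  have inner_abs: "(\<integral>t. norm (F z t) \<partial>lborel) = \<bar>snd z\<bar> * Lm (fst z)" for z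
  proof -
    have "(\<lambda>t. norm (F z t)) = (\<lambda>t. if a \<le> t \<and> t \<le> b \<and> t < fst z then \<bar>snd z\<bar> else 0)"
      unfolding F_def by auto
    then show ?thesis using int_if_c by simp
  qed
  have sndint: "integrable \<pi> snd" by (rule cp_snd_int[OF \<pi>])
  have snd_meas[measurable]: "snd \<in> borel_measurable \<pi>" by (rule cp_snd_meas[OF \<pi>])
  have fst_meas[measurable]: "fst \<in> borel_measurable \<pi>" by (rule cp_fst_meas[OF \<pi>])
  have bound_int: "integrable \<pi> (\<lambda>z. (b - a) * \<bar>snd z\<bar>)"
    using sndint by simp
  have Fint: "integrable (\<pi> \<Otimes>\<^sub>M lborel) (\<lambda>p. F (fst p) (snd p))"
  proof (rule PS.Fubini_integrable[OF Fm])
    show "integrable \<pi> (\<lambda>x. \<integral>y. norm (F (fst (x, y)) (snd (x, y))) \<partial>lborel)"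
      unfolding fst_conv snd_conv inner_abs
    proof (rule Bochner_Integration.integrable_bound[OF bound_int])
      show "(\<lambda>x. \<bar>snd x\<bar> * Lm (fst x)) \<in> borel_measurable \<pi>"
        using cp_meas[OF \<pi>, of "\<lambda>x. \<bar>snd x\<bar> * Lm (fst x)"] by simp
      show "AE x in \<pi>. norm (\<bar>snd x\<bar> * Lm (fst x)) \<le> norm ((b - a) * \<bar>snd x\<bar>)"
      proof (intro AE_I2)
        fix x
        have "\<bar>snd x\<bar> * Lm (fst x) \<le> \<bar>snd x\<bar> * (b - a)"
          by (rule mult_left_mono[OF Lm_le abs_ge_zero])
        then show "norm (\<bar>snd x\<bar> * Lm (fst x)) \<le> norm ((b - a) * \<bar>snd x\<bar>)"
          using Lm_nonneg[of "fst x"] ab by (simp add: abs_mult mult.commute)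
      qed
    qed
    show "AE x in \<pi>. integrable lborel (\<lambda>y. F (fst (x, y)) (snd (x, y)))"
      unfolding F_def fst_conv snd_conv by (intro AE_I2 integrable_if_c)
  qed
  have Fint': "integrable (\<pi> \<Otimes>\<^sub>M lborel) (case_prod F)"
    using Fint by (simp add: case_prod_beta')
  have innerpi: "(\<integral>z. F z t \<partial>\<pi>) = indicator {a..b} t * gf \<pi> t" for t
    unfolding F_def gf_def by (cases "a \<le> t \<and> t \<le> b") auto
  have I1: "integrable lborel (\<lambda>t. \<integral>z. F z t \<partial>\<pi>)"
    by (rule PS.integrable_snd[OF Fint'])
  then show "integrable lborel (\<lambda>t. indicator {a..b} t * gf \<pi> t)"
    unfolding innerpi .
  have fub: "(\<integral>t. (\<integral>z. F z t \<partial>\<pi>) \<partial>lborel) = (\<integral>z. (\<integral>t. F z t \<partial>lborel) \<partial>\<pi>)"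
    by (rule PS.Fubini_integral[OF Fint'])
  have "(\<integral>z. (\<integral>t. F z t \<partial>lborel) \<partial>\<pi>) = (\<integral>z. snd z * (fst z - a) \<partial>\<pi>)"
  proof (rule integral_cong_AE)
    show "AE z in \<pi>. (\<integral>t. F z t \<partial>lborel) = snd z * (fst z - a)"
      using cp_AE_fst[OF \<pi>] by eventually_elim (simp add: inner Lm_eq)
    show "(\<lambda>z. \<integral>t. F z t \<partial>lborel) \<in> borel_measurable \<pi>"
      unfolding inner using cp_meas[OF \<pi>, of "\<lambda>x. snd x * Lm (fst x)"] by simp
  qed simp
  have int2: "integrable \<pi> (\<lambda>z. snd z * (fst z - a))"
  proof (rule Bochner_Integration.integrable_bound[OF bound_int])
    show "AE x in \<pi>. norm (snd x * (fst x - a)) \<le> norm ((b - a) * \<bar>snd x\<bar>)"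
      using cp_AE_fst[OF \<pi>]
    proof eventually_elim
      case (elim x)
      then have "\<bar>fst x - a\<bar> \<le> b - a" by auto
      then have "\<bar>snd x\<bar> * \<bar>fst x - a\<bar> \<le> \<bar>snd x\<bar> * (b - a)" by (rule mult_left_mono) simp
      then show ?case using ab by (simp add: abs_mult mult.commute)
    qed
  qed simp
  have "(\<integral>z. fst z * snd z \<partial>\<pi>) = (\<integral>z. snd z * (fst z - a) + a * snd z \<partial>\<pi>)"
    by (rule Bochner_Integration.integral_cong) (auto simp: algebra_simps)
  also have "\<dots> = (\<integral>z. snd z * (fst z - a) \<partial>\<pi>) + a * (\<integral>z. snd z \<partial>\<pi>)"
    using int2 sndint by simp
  finally show "(\<integral>z. fst z * snd z \<partial>\<pi>) = a * (\<integral>z. snd z \<partial>\<pi>) + (\<integral>t. indicator {a..b} t * gf \<pi> t \<partial>lborel)"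
    using fub innerpi \<open>(\<integral>z. (\<integral>t. F z t \<partial>lborel) \<partial>\<pi>) = _\<close> by simp
qed


lemma int_null:
  fixes f :: "'x \<Rightarrow> real"
  assumes "prob_space N" "A \<in> sets N" "measure N A = 0" "f \<in> borel_measurable N"
  shows "(\<integral>x. (if x \<in> A then f x else 0) \<partial>N) = 0"
proof -
  interpret N: prob_space N by fact
  have "A \<in> null_sets N" using assms(2,3) by (simp add: N.emeasure_eq_measure null_sets_def)
  then have "AE x in N. x \<notin> A" by (rule AE_not_in)
  then have "(\<integral>x. (if x \<in> A then f x else 0) \<partial>N) = (\<integral>x. 0 \<partial>N)"
    using assms(2,4) by (intro integral_cong_AE) (auto elim!: eventually_mono)
  then show ?thesis by simp
qed

lemma int_full:
  fixes f :: "'x \<Rightarrow> real"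
  assumes "prob_space N" "A \<in> sets N" "measure N A = 1" "f \<in> borel_measurable N"
  shows "(\<integral>x. (if x \<in> A then f x else 0) \<partial>N) = (\<integral>x. f x \<partial>N)"
proof -
  interpret N: prob_space N by fact
  have "AE x in N. x \<in> A" by (rule N.AE_prob_1) fact
  then show ?thesis
    using assms(2,4) by (intro integral_cong_AE) (auto elim!: eventually_mono)
qed

definition "G0 t = (\<integral>s. (if t < m s then Y s else 0) \<partial>M)"

lemma gf_pi0: "gf pi0 t = G0 t"
proof -
  have "gf pi0 t = (\<integral>s. (\<lambda>z. if t < fst z then snd z else 0) (m s, Y s) \<partial>M)"
    unfolding gf_def pi0_def by (rule integral_distr) simp_all
  also have "\<dots> = G0 t" unfolding G0_def by (rule Bochner_Integration.integral_cong) auto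
  finally show ?thesis .
qed

lemma bathtub:
  assumes \<pi>: "\<pi> \<in> couplings mu \<nu>"
  shows "gf \<pi> t \<le> G0 t"
proof -
  interpret P: prob_space \<pi> using cpD(1)[OF \<pi>] .
  have sp: "space \<pi> = UNIV" using cpD(5)[OF \<pi>] .
  have snd_meas[measurable]: "snd \<in> borel_measurable \<pi>" by (rule cp_snd_meas[OF \<pi>])
  have fst_meas[measurable]: "fst \<in> borel_measurable \<pi>" by (rule cp_fst_meas[OF \<pi>])
  define A where "A = {s. t < m s}"
  define B where "B = {z::real\<times>real. t < fst z}"
  have Asets: "A \<in> sets M" unfolding A_def by measurable
  have Bsets: "B \<in> sets \<pi>"
  proof -
    have "B = fst -` {t<..} \<inter> space \<pi>" unfolding B_def sp by auto
    then show ?thesis using measurable_sets[OF fst_meas, of "{t<..}"] by simp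
  qed
  define \<alpha> where "\<alpha> = measure M A"
  have mB: "measure \<pi> B = \<alpha>" unfolding B_def \<alpha>_def A_def by (rule cp_measure_fst[OF \<pi>])
  have gfB: "gf \<pi> t = (\<integral>z. (if z \<in> B then snd z else 0) \<partial>\<pi>)" unfolding gf_def B_def by simp
  have G0A: "G0 t = (\<integral>s. (if s \<in> A then Y s else 0) \<partial>M)" unfolding G0_def A_def by simp
  consider "\<alpha> = 0" | "\<alpha> = 1" | "0 < \<alpha>" "\<alpha> < 1"
    using MM.prob_le_1[of A] measure_nonneg[of M A] unfolding \<alpha>_def by linarith
  then show ?thesis
  proof cases
    case 1
    have "gf \<pi> t = 0" unfolding gfB
      by (rule int_null) (use cpD(1)[OF \<pi>] Bsets mB 1 in auto)
    moreover have "G0 t = 0" unfolding G0A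
      by (rule int_null) (use MM.prob_space_axioms Asets 1 \<alpha>_def in auto)
    ultimately show ?thesis by simp
  next
    case 2
    have "gf \<pi> t = (\<integral>z. snd z \<partial>\<pi>)" unfolding gfB
      by (rule int_full) (use cpD(1)[OF \<pi>] Bsets mB 2 in auto)
    also have "\<dots> = (\<integral>s. Y s \<partial>M)" using cp_snd(1)[OF \<pi>, of "\<lambda>x. x"] by simp
    also have "\<dots> = G0 t" unfolding G0A
      by (rule int_full[symmetric]) (use MM.prob_space_axioms Asets 2 \<alpha>_def in auto)
    finally show ?thesis by simp
  next
    case 3
    have PA: "P \<inter> A \<noteq> {}"
    proof
      assume "P \<inter> A = {}"
      then have "AE x in M. x \<in> A \<longleftrightarrow> x \<in> {}" using AE_P by (auto elim!: eventually_mono)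
      then have "measure M A = measure M {}" by (rule measure_eq_AE) (use Asets in auto)
      then show False using 3 \<alpha>_def by simp
    qed
    have PnA: "P - A \<noteq> {}"
    proof
      assume "P - A = {}"
      then have "AE x in M. x \<in> A \<longleftrightarrow> x \<in> space M" using AE_P by (auto elim!: eventually_mono)
      then have "measure M A = measure M (space M)" by (rule measure_eq_AE) (use Asets in auto)
      then show False using 3 \<alpha>_def MM.prob_space by simp
    qed
    have key: "Y s \<le> Y s'" if s: "s \<in> P - A" and s': "s' \<in> P \<inter> A" for s s'
    proof -
      have "s \<le> s'"
      proof (rule ccontr)
        assume "\<not> s \<le> s'"
        then have "s' < s" by simp
        moreover have "s \<in> {s. q s > 0}" "s' \<in> {s. q s > 0}" using s s' unfolding P_def by auto
        ultimately have "m s' < m s" using m_mono by (auto simp: strict_mono_on_def)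
        then show False using s s' unfolding A_def by auto
      qed
      then show ?thesis using Y_mono s s' by auto
    qed
    define c where "c = Inf (Y ` (P \<inter> A))"
    obtain s2 where s2: "s2 \<in> P - A" using PnA by auto
    have bdd: "bdd_below (Y ` (P \<inter> A))" using key[OF s2] by (auto intro!: bdd_belowI)
    have c_lo: "c \<le> Y s'" if "s' \<in> P \<inter> A" for s'
      unfolding c_def using that bdd by (auto intro!: cInf_lower)
    have c_hi: "Y s \<le> c" if "s \<in> P - A" for s
      unfolding c_def using that PA key by (auto intro!: cINF_greatest)
    have iYc: "integrable M (\<lambda>s. max (Y s - c) 0)"
    proof (rule Bochner_Integration.integrable_bound)
      show "integrable M (\<lambda>s. \<bar>Y s\<bar> + \<bar>c\<bar>)" using Y_int by simp
      show "AE x in M. norm (max (Y x - c) 0) \<le> norm (\<bar>Y x\<bar> + \<bar>c\<bar>)" by (intro AE_I2) auto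
    qed simp
    have i1: "integrable \<pi> (\<lambda>z. if z \<in> B then snd z else 0)"
    proof (rule Bochner_Integration.integrable_bound)
      show "integrable \<pi> (\<lambda>z. \<bar>snd z\<bar>)" using cp_snd_int[OF \<pi>] by simp
      show "AE x in \<pi>. norm (if x \<in> B then snd x else 0) \<le> norm \<bar>snd x\<bar>" by (intro AE_I2) auto
    qed (use Bsets in simp)
    have i2: "integrable \<pi> (\<lambda>z. max (snd z - c) 0)"
      using cp_snd(2)[OF \<pi>, of "\<lambda>y. max (y - c) 0"] iYc by simp
    have i3: "integrable \<pi> (\<lambda>z. c * indicator B z)"
      using Bsets by (intro integrable_mult_right) (simp add: P.emeasure_eq_measure)
    have "gf \<pi> t \<le> (\<integral>z. max (snd z - c) 0 + c * indicator B z \<partial>\<pi>)"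
      unfolding gfB
      by (rule integral_mono[OF i1 Bochner_Integration.integrable_add[OF i2 i3]]) (auto simp: indicator_def)
    also have "\<dots> = (\<integral>z. max (snd z - c) 0 \<partial>\<pi>) + c * \<alpha>"
      using i2 i3 Bsets mB sp by simp
    also have "(\<integral>z. max (snd z - c) 0 \<partial>\<pi>) = (\<integral>s. max (Y s - c) 0 \<partial>M)"
      using cp_snd(1)[OF \<pi>, of "\<lambda>y. max (y - c) 0"] by simp
    also have "\<dots> = (\<integral>s. (if s \<in> A then Y s else 0) - c * indicator A s \<partial>M)"
    proof (rule integral_cong_AE)
      show "AE x in M. max (Y x - c) 0 = (if x \<in> A then Y x else 0) - c * indicator A x"
        using AE_P
      proof eventually_elim
        case (elim x)
        then show ?case using c_lo[of x] c_hi[of x] by (auto simp: indicator_def)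
      qed
    qed (use Asets in simp_all)
    also have "\<dots> = G0 t - c * \<alpha>"
    proof -
      have iA: "integrable M (\<lambda>s. if s \<in> A then Y s else 0)"
      proof (rule Bochner_Integration.integrable_bound)
        show "integrable M (\<lambda>z. \<bar>Y z\<bar>)" using Y_int by simp
        show "AE x in M. norm (if x \<in> A then Y x else 0) \<le> norm \<bar>Y x\<bar>" by (intro AE_I2) auto
      qed (use Asets in simp)
      have iA2: "integrable M (\<lambda>s. c * indicator A s)"
        using Asets by (intro integrable_mult_right) (simp add: MM.emeasure_eq_measure)
      show ?thesis using iA iA2 Asets unfolding G0A \<alpha>_def by simp
    qed
    finally show ?thesis by simp
  qed
qed


lemma cp_cross_int:
  assumes \<pi>: "\<pi> \<in> couplings mu \<nu>"
  shows "integrable \<pi> (\<lambda>z. fst z * snd z)"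
proof (rule Bochner_Integration.integrable_bound)
  show "integrable \<pi> (\<lambda>z. K * \<bar>snd z\<bar>)" using cp_snd_int[OF \<pi>] by simp
  show "AE x in \<pi>. norm (fst x * snd x) \<le> norm (K * \<bar>snd x\<bar>)"
    using cp_AE_fst[OF \<pi>]
  proof eventually_elim
    case (elim x)
    then have "\<bar>fst x\<bar> \<le> K" unfolding K_def by linarith
    then have "\<bar>fst x\<bar> * \<bar>snd x\<bar> \<le> K * \<bar>snd x\<bar>" by (rule mult_right_mono) simp
    then show ?case using K_nonneg by (simp add: abs_mult)
  qed
qed (use cp_meas[OF \<pi>, of "\<lambda>z. fst z * snd z"] in simp)

lemma cross_le:
  assumes \<pi>: "\<pi> \<in> couplings mu \<nu>"
  shows "(\<integral>z. fst z * snd z \<partial>\<pi>) \<le> (\<integral>z. fst z * snd z \<partial>pi0)"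
proof -
  have e1: "(\<integral>z. snd z \<partial>\<pi>) = (\<integral>z. snd z \<partial>pi0)"
    using cp_snd(1)[OF \<pi>, of "\<lambda>x. x"] cp_snd(1)[OF pi0_cp, of "\<lambda>x. x"] by simp
  have "(\<integral>t. indicator {a..b} t * gf \<pi> t \<partial>lborel) \<le> (\<integral>t. indicator {a..b} t * gf pi0 t \<partial>lborel)"
  proof (rule integral_mono[OF layer(1)[OF \<pi>] layer(1)[OF pi0_cp]])
    fix t :: real
    show "indicator {a..b} t * gf \<pi> t \<le> indicator {a..b} t * gf pi0 t"
      using bathtub[OF \<pi>, of t] gf_pi0[of t] by (auto simp: indicator_def)
  qed
  then show ?thesis using layer(2)[OF \<pi>] layer(2)[OF pi0_cp] e1 by simp
qed

lemma pi0_cross: "(\<integral>z. fst z * snd z \<partial>pi0) = (\<integral>s. m s * Y s \<partial>M)"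
proof -
  have "(\<integral>z. fst z * snd z \<partial>pi0) = (\<integral>s. (\<lambda>z. fst z * snd z) (m s, Y s) \<partial>M)"
    unfolding pi0_def by (rule integral_distr) simp_all
  then show ?thesis by simp
qed

lemma sq_expand:
  assumes \<pi>: "\<pi> \<in> couplings mu \<nu>"
  shows "integrable \<pi> (\<lambda>z. (fst z - snd z)^2)"
    "(\<integral>z. (fst z - snd z)^2 \<partial>\<pi>) = (\<integral>s. (m s)^2 \<partial>M) - 2 * (\<integral>z. fst z * snd z \<partial>\<pi>) + (\<integral>s. (Y s)^2 \<partial>M)"
proof -
  have i1: "integrable \<pi> (\<lambda>z. (fst z)^2)" using cp_fst(2)[OF \<pi>, of "\<lambda>x. x^2"] m_sq_int by simp
  have i2: "integrable \<pi> (\<lambda>z. (snd z)^2)" using cp_snd(2)[OF \<pi>, of "\<lambda>x. x^2"] Y_sq_int by simp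
  have i3: "integrable \<pi> (\<lambda>z. fst z * snd z)" by (rule cp_cross_int[OF \<pi>])
  have eq: "(\<lambda>z::real\<times>real. (fst z - snd z)^2) = (\<lambda>z. (fst z)^2 - 2 * (fst z * snd z) + (snd z)^2)"
    by (auto simp: power2_eq_square algebra_simps)
  show "integrable \<pi> (\<lambda>z. (fst z - snd z)^2)" unfolding eq using i1 i2 i3 by simp
  have "(\<integral>z. (fst z - snd z)^2 \<partial>\<pi>) = (\<integral>z. (fst z)^2 \<partial>\<pi>) - 2 * (\<integral>z. fst z * snd z \<partial>\<pi>) + (\<integral>z. (snd z)^2 \<partial>\<pi>)"
    unfolding eq using i1 i2 i3 by simp
  then show "(\<integral>z. (fst z - snd z)^2 \<partial>\<pi>) = (\<integral>s. (m s)^2 \<partial>M) - 2 * (\<integral>z. fst z * snd z \<partial>\<pi>) + (\<integral>s. (Y s)^2 \<partial>M)"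
    using cp_fst(1)[OF \<pi>, of "\<lambda>x. x^2"] cp_snd(1)[OF \<pi>, of "\<lambda>x. x^2"] by simp
qed

definition "V = (\<integral>s. (m s)^2 \<partial>M) - 2 * (\<integral>s. m s * Y s \<partial>M) + (\<integral>s. (Y s)^2 \<partial>M)"

lemma cp_nn:
  assumes \<pi>: "\<pi> \<in> couplings mu \<nu>"
  shows "(\<integral>\<^sup>+ z. ennreal ((fst z - snd z)\<^sup>2) \<partial>\<pi>) = ennreal (\<integral>z. (fst z - snd z)^2 \<partial>\<pi>)"
  by (rule nn_integral_eq_integral[OF sq_expand(1)[OF \<pi>]]) simp

lemma W2_eq: "W2_sq mu \<nu> = ennreal V"
  unfolding W2_sq_def
proof (rule antisym)
  have "(\<integral>\<^sup>+ z. ennreal ((fst z - snd z)\<^sup>2) \<partial>pi0) = ennreal V"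
    unfolding cp_nn[OF pi0_cp] sq_expand(2)[OF pi0_cp] pi0_cross V_def ..
  then show "(INF \<pi>\<in>couplings mu \<nu>. \<integral>\<^sup>+ z. ennreal ((fst z - snd z)\<^sup>2) \<partial>\<pi>) \<le> ennreal V"
    using INF_lower[OF pi0_cp, of "\<lambda>\<pi>. \<integral>\<^sup>+ z. ennreal ((fst z - snd z)\<^sup>2) \<partial>\<pi>"] by simp
  show "ennreal V \<le> (INF \<pi>\<in>couplings mu \<nu>. \<integral>\<^sup>+ z. ennreal ((fst z - snd z)\<^sup>2) \<partial>\<pi>)"
  proof (rule INF_greatest)
    fix \<pi> assume \<pi>: "\<pi> \<in> couplings mu \<nu>"
    have "V \<le> (\<integral>z. (fst z - snd z)^2 \<partial>\<pi>)"
      unfolding sq_expand(2)[OF \<pi>] V_def using cross_le[OF \<pi>] pi0_cross by simp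
    then show "ennreal V \<le> (\<integral>\<^sup>+ z. ennreal ((fst z - snd z)\<^sup>2) \<partial>\<pi>)"
      unfolding cp_nn[OF \<pi>] by (rule ennreal_leI)
  qed
qed

lemma V_nonneg: "0 \<le> V"
proof -
  have "V = (\<integral>z. (fst z - snd z)^2 \<partial>pi0)"
    unfolding sq_expand(2)[OF pi0_cp] pi0_cross V_def ..
  also have "\<dots> \<ge> 0" by simp
  finally show ?thesis .
qed

lemma main_core:
  "(1/2) * ((\<integral>s. (m s)^2 \<partial>M) + (\<integral>z. z^2 \<partial>\<nu>) - enn2real (W2_sq (distr M borel m) \<nu>))
     = (\<integral>s. m s * Y s \<partial>M)"
proof -
  have "(\<integral>z. z^2 \<partial>\<nu>) = (\<integral>s. (Y s)^2 \<partial>M)"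
    using integral_distr[of Y M borel "\<lambda>z. z^2"] distr_Y by simp
  moreover have "enn2real (W2_sq (distr M borel m) \<nu>) = V"
    using W2_eq V_nonneg unfolding mu_def by simp
  ultimately show ?thesis unfolding V_def by simp
qed

end


theorem lemma2:
  fixes N :: nat and v :: "nat \<Rightarrow> real" and p :: "nat \<Rightarrow> real"
    and post :: "nat \<Rightarrow> real \<Rightarrow> real" and q :: "real \<Rightarrow> real"
    and lam \<sigma>Z T :: real
  assumes N2: "N \<ge> 2"
    and v_distinct: "inj_on v {1..N}"
    and p_pos: "\<forall>n\<in>{1..N}. p n > 0"
    and p_sum: "(\<Sum>n=1..N. p n) = 1"
    and lam_pos: "lam > 0" and sig_pos: "\<sigma>Z > 0" and T_pos: "T > 0"
    and q_meas: "q \<in> borel_measurable borel"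
    and q_nonneg: "\<forall>s. q s \<ge> 0"
    and q_prob: "(\<integral>\<^sup>+ s. ennreal (q s) \<partial>lborel) = 1"
    and post_meas: "\<forall>n\<in>{1..N}. post n \<in> borel_measurable borel"
    and post_nonneg: "\<forall>n\<in>{1..N}. \<forall>s. post n s \<ge> 0"
    and post_sum: "\<forall>s. (\<Sum>n=1..N. post n s) = 1"
    and post_consistent: "\<forall>n\<in>{1..N}. (\<integral> s. post n s * q s \<partial>lborel) = p n"
    and mono: "strict_mono_on {s. q s > 0} (cond_mean N v post)"
  shows "(1/2) * ((\<integral> s. (cond_mean N v post s)\<^sup>2 \<partial>(density lborel q))
              + (\<integral> z. z\<^sup>2 \<partial>(gauss \<sigma>Z T))
              - enn2real (W2_sq (distr (density lborel q) borel (cond_mean N v post)) (gauss \<sigma>Z T)))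
          - lam * mutual_info N p post q
       = (\<integral> s. cond_mean N v post s * quantile (cdf (gauss \<sigma>Z T)) (cdf (density lborel q) s) * q s \<partial>lborel)
          - lam * ((\<Sum>n=1..N. (\<integral> s. ln (post n s) * post n s * q s \<partial>lborel))
                   - (\<Sum>n=1..N. ln (p n) * p n))"
proof -
  define B where "B = (\<Sum>n=1..N. \<bar>v n\<bar>)"
  have post_le1: "post n s \<le> 1" if "n \<in> {1..N}" for n s
  proof -
    have "post n s \<le> (\<Sum>k=1..N. post k s)"
      by (rule member_le_sum) (use that post_nonneg in auto)
    then show ?thesis using post_sum by simp
  qed
  have cm_bnd: "- B \<le> cond_mean N v post s \<and> cond_mean N v post s \<le> B" for s
  proof -
    have "\<bar>cond_mean N v post s\<bar> \<le> (\<Sum>n=1..N. \<bar>v n * post n s\<bar>)"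
      unfolding cond_mean_def by (rule sum_abs)
    also have "\<dots> \<le> (\<Sum>n=1..N. \<bar>v n\<bar>)"
    proof (rule sum_mono)
      fix n assume n: "n \<in> {1..N}"
      have "\<bar>v n\<bar> * post n s \<le> \<bar>v n\<bar> * 1"
        by (rule mult_left_mono[OF post_le1[OF n]]) simp
      then show "\<bar>v n * post n s\<bar> \<le> \<bar>v n\<bar>" using post_nonneg n by (simp add: abs_mult)
    qed
    finally show ?thesis unfolding B_def by linarith
  qed
  have cm_meas: "cond_mean N v post \<in> borel_measurable borel"
  proof -
    have "(\<lambda>s. \<Sum>n=1..N. v n * post n s) \<in> borel_measurable borel"
      using post_meas by (intro borel_measurable_sum borel_measurable_times borel_measurable_const) auto
    then show ?thesis unfolding cond_mean_def[abs_def] .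
  qed
  have nu: "real_distribution (gauss \<sigma>Z T)"
    unfolding gauss_def real_distribution_def real_distribution_axioms_def
    using prob_space_normal_density[of "\<sigma>Z * sqrt T" 0] sig_pos T_pos by simp
  have nu_sq: "integrable (gauss \<sigma>Z T) (\<lambda>z. z^2)"
    unfolding gauss_def
    using integrable_normal_moment[of "\<sigma>Z * sqrt T" 0 2] sig_pos T_pos
    by (subst integrable_density) simp_all
  interpret C: core q "cond_mean N v post" "gauss \<sigma>Z T" "- B" B
  proof (rule core.intro)
    show "q \<in> borel_measurable borel" by (rule q_meas)
    show "\<And>s. 0 \<le> q s" using q_nonneg by blast
    show "(\<integral>\<^sup>+ s. ennreal (q s) \<partial>lborel) = 1" by (rule q_prob)
    show "cond_mean N v post \<in> borel_measurable borel" by (rule cm_meas)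
    show "\<And>s. - B \<le> cond_mean N v post s \<and> cond_mean N v post s \<le> B" by (rule cm_bnd)
    show "strict_mono_on {s. 0 < q s} (cond_mean N v post)" by (rule mono)
    show "real_distribution (gauss \<sigma>Z T)" by (rule nu)
    show "integrable (gauss \<sigma>Z T) (\<lambda>z. z\<^sup>2)" by (rule nu_sq)
  qed
  have main: "(1/2) * ((\<integral>s. (cond_mean N v post s)\<^sup>2 \<partial>(density lborel q))
              + (\<integral> z. z\<^sup>2 \<partial>(gauss \<sigma>Z T))
              - enn2real (W2_sq (distr (density lborel q) borel (cond_mean N v post)) (gauss \<sigma>Z T)))
     = (\<integral> s. cond_mean N v post s * quantile (cdf (gauss \<sigma>Z T)) (cdf (density lborel q) s) * q s \<partial>lborel)"
  proof -
    have Ym: "C.Y \<in> borel_measurable borel" by (rule C.Y_meas)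
    have e1: "(\<integral>s. cond_mean N v post s * C.Y s \<partial>C.M)
        = (\<integral>s. q s *\<^sub>R (cond_mean N v post s * C.Y s) \<partial>lborel)"
      unfolding C.M_def
      by (rule integral_density) (use Ym cm_meas q_meas q_nonneg in auto)
    have e2: "C.Y s = quantile (cdf (gauss \<sigma>Z T)) (cdf (density lborel q) s)" for s
      unfolding C.Y_def C.G_def C.Qf_def C.M_def by (rule refl)
    have e3: "(\<integral>s. q s *\<^sub>R (cond_mean N v post s * C.Y s) \<partial>lborel)
       = (\<integral> s. cond_mean N v post s * quantile (cdf (gauss \<sigma>Z T)) (cdf (density lborel q) s) * q s \<partial>lborel)"
      by (rule Bochner_Integration.integral_cong) (simp_all only: e2 real_scaleR_def mult_ac)
    have e4: "(1/2) * ((\<integral>s. (cond_mean N v post s)\<^sup>2 \<partial>(density lborel q))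
              + (\<integral> z. z\<^sup>2 \<partial>(gauss \<sigma>Z T))
              - enn2real (W2_sq (distr (density lborel q) borel (cond_mean N v post)) (gauss \<sigma>Z T)))
       = (\<integral>s. cond_mean N v post s * C.Y s \<partial>C.M)"
      using C.main_core unfolding C.M_def .
    show ?thesis using e4 e1 e3 by simp
  qed
  have xlnx: "\<bar>ln x * x\<bar> \<le> 1" if "0 \<le> x" "x \<le> 1" for x :: real
  proof (cases "x = 0")
    case False
    then have xp: "0 < x" using that by simp
    have "ln x \<le> 0" using that xp by simp
    then have le0: "ln x * x \<le> 0" using xp by (simp add: mult_nonpos_nonneg)
    have "ln (1/x) \<le> 1/x - 1" using ln_le_minus_one[of "1/x"] xp by simp
    then have "- ln x \<le> 1/x - 1" using xp by (simp add: ln_div)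
    then have "- ln x * x \<le> (1/x - 1) * x" using xp by (intro mult_right_mono) auto
    then have "- (ln x * x) \<le> 1 - x" using xp by (simp add: algebra_simps)
    then show ?thesis using le0 that by linarith
  qed simp
  have q_int: "integrable lborel q"
    using q_prob q_nonneg q_meas
    by (intro integrableI_nonneg) (auto simp: less_top[symmetric])
  have int_n: "integrable lborel (\<lambda>s. ln (post n s) * post n s * q s)" if n: "n \<in> {1..N}" for n
  proof (rule Bochner_Integration.integrable_bound[OF q_int])
    show "(\<lambda>s. ln (post n s) * post n s * q s) \<in> borel_measurable lborel"
    proof -
      have [measurable]: "post n \<in> borel_measurable borel" using post_meas n by blast
      show ?thesis using q_meas by simp
    qed
    show "AE x in lborel. norm (ln (post n x) * post n x * q x) \<le> norm (q x)"
    proof (intro AE_I2)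
      fix x
      have "\<bar>ln (post n x) * post n x\<bar> * q x \<le> 1 * q x"
        by (rule mult_right_mono[OF xlnx]) (use post_nonneg post_le1 n q_nonneg in auto)
      then show "norm (ln (post n x) * post n x * q x) \<le> norm (q x)"
        using q_nonneg[rule_format, of x] by (simp add: abs_mult)
    qed
  qed
  have mi: "mutual_info N p post q
      = (\<Sum>n=1..N. (\<integral> s. ln (post n s) * post n s * q s \<partial>lborel)) - (\<Sum>n=1..N. ln (p n) * p n)"
  proof -
    have "(\<integral>s. q s * entropy_vec N (\<lambda>n. post n s) \<partial>lborel)
        = (\<integral>s. - (\<Sum>n=1..N. ln (post n s) * post n s * q s) \<partial>lborel)"
      unfolding entropy_vec_def
      by (rule Bochner_Integration.integral_cong) (auto simp: sum_distrib_left mult_ac)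
    also have "\<dots> = - (\<Sum>n=1..N. (\<integral> s. ln (post n s) * post n s * q s \<partial>lborel))"
      using int_n by (simp add: Bochner_Integration.integral_sum)
    finally show ?thesis unfolding mutual_info_def entropy_vec_def by (simp add: mult_ac)
  qed
  show ?thesis using main mi by simp
qed


end
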